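(* Let $L\geq 2$, ${\bf A}\in\mathbb{R}^{M\times N}$ and ${\bf y}\in\mathbb{R}^{M}$. Define the overparameterized loss function $\mathcal{L}_{\text{over}}$ as \begin{equation} \mathcal{L}_{\text{over}}\big({\bf x}^{(1)}, \dots, {\bf x}^{(L)}\big) := \frac{1}{2}\,\|{\bf A}\tilde{\bf x}-{\bf y}\|_2^2 \end{equation} where $\tilde{\bf x} = {\bf x}^{(1)}\odot \cdots\odot {\bf x}^{(L)}$. Let ${\bf x}_0 > \boldsymbol{0}$ be fixed and, for any $k$, let ${\bf x}^{(k)}(t)$ follow the flow $\big({\bf x}^{(k)}\big)'(t) = -\nabla_{{\bf x}^{(k)}} \mathcal{L}_{\text{over}}$ with ${\bf x}^{(k)}(0) = {\bf x}_0$. Let $S_+ := \operatorname{argmin}_{{\bf z} \ge \boldsymbol{0}} \| {\bf A}{\bf z} - {\bf y} \|_2^2$ be the set of solutions of the non-negative least squares problem. Then the limit $\tilde{\bf x}_\infty:= \lim_{t\to\infty} \tilde{\bf x}(t)$ exists and lies in $S_+$. Moreover, for ${\bf y}_+ := {\bf A}{\bf x}_+$ with ${\bf x}_+ \in S_+$, there exists an absolute constant $C > 0$ that only depends on the choice of ${\bf A}$, ${\bf y}$, and ${\bf x}_0$ such that \begin{align*} \| {\bf A} \tilde{\bf x}(t) - {\bf y}_+ \|_2^2 \le \frac{C}{t}, \end{align*} for any $t > 0$.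
   Context: $\odot$ denotes the Hadamard (entry-wise) product. ${\bf y}_+ = {\bf A}{\bf x}_+$ does not depend on the choice of ${\bf x}_+ \in S_+$: it is the unique Euclidean projection of ${\bf y}$ onto the closed convex set $C_+ := \{ {\bf A}{\bf z} \colon {\bf z} \ge \boldsymbol{0} \}$. Inequalities between vectors are entry-wise. *)

theory Defs
  imports "HOL-Analysis.Analysis"
begin

definition hadamard_prod :: "nat \<Rightarrow> (nat \<Rightarrow> real^'n) \<Rightarrow> real^'n" where
  "hadamard_prod L X = (\<chi> i. \<Prod>k\<in>{1..L}. X k $ i)"

definition L_over :: "nat \<Rightarrow> real^'n^'m \<Rightarrow> real^'m \<Rightarrow> (nat \<Rightarrow> real^'n) \<Rightarrow> real" where
  "L_over L A y X = (1/2) * (norm (A *v hadamard_prod L X - y))\<^sup>2"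

definition NNLS_sol :: "real^'n^'m \<Rightarrow> real^'m \<Rightarrow> (real^'n) set" where
  "NNLS_sol A y = {z. (\<forall>i. 0 \<le> z $ i) \<and>
      (\<forall>w. (\<forall>i. 0 \<le> w $ i) \<longrightarrow> (norm (A *v z - y))\<^sup>2 \<le> (norm (A *v w - y))\<^sup>2)}"

end

theory Submission
  imports Defs
begin



lemma diag_bl: "bounded_linear (\<lambda>z::real^'n. (\<chi> i. z$i * P i))"
proof -
  have "linear (\<lambda>z::real^'n. (\<chi> i. z$i * P i))"
    by (rule linearI) (auto simp: vec_eq_iff algebra_simps)
  then show ?thesis by (simp add: linear_conv_bounded_linear)
qed

lemma vec_comp_deriv:
  fixes f :: "real \<Rightarrow> real^'n"
  assumes "(f has_vector_derivative v) F"
  shows "((\<lambda>t. f t $ i) has_real_derivative v $ i) F"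
  using bounded_linear.has_derivative[OF bounded_linear_vec_nth[of i], OF assms[unfolded has_vector_derivative_def]]
  by (simp add: has_field_derivative_def mult.commute[of _ "v$i"])

lemma grad_eq:
  fixes A :: "real^'n^'m"
  assumes "GDERIV (\<lambda>z. (1/2) * (norm (A *v (\<chi> i. z$i * P i) - y))\<^sup>2) x :> g"
  shows "g = (\<chi> i. P i * (transpose A *v (A *v (\<chi> i. x$i * P i) - y)) $ i)"
proof -
  define M where "M = (\<lambda>z::real^'n. A *v (\<chi> i. z$i * P i))"
  have blM: "bounded_linear M" unfolding M_def
    using bounded_linear_compose[OF matrix_vector_mul_bounded_linear diag_bl] by blast
  let ?g0 = "(\<chi> i. P i * (transpose A *v (M x - y)) $ i)"
  have eq: "(\<lambda>z. (1/2) * (norm (A *v (\<chi> i. z$i * P i) - y))\<^sup>2) = (\<lambda>z. (1/2) * ((M z - y) \<bullet> (M z - y)))"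
    by (simp add: M_def power2_norm_eq_inner)
  have d1: "((\<lambda>z. (1/2) * ((M z - y) \<bullet> (M z - y))) has_derivative (\<lambda>h. (1/2) * (M h \<bullet> (M x - y) + (M x - y) \<bullet> M h))) (at x)"
    by (auto intro!: derivative_eq_intros bounded_linear.has_derivative[OF blM])
  have "(\<lambda>h. (1/2) * (M h \<bullet> (M x - y) + (M x - y) \<bullet> M h)) = (\<lambda>h. h \<bullet> ?g0)"
  proof
    fix h
    have "(1/2) * (M h \<bullet> (M x - y) + (M x - y) \<bullet> M h) = (M x - y) \<bullet> (A *v (\<chi> i. h$i * P i))"
      by (simp add: M_def inner_commute)
    also have "\<dots> = ((M x - y) v* A) \<bullet> (\<chi> i. h$i * P i)" by (simp add: dot_lmul_matrix)
    also have "\<dots> = h \<bullet> ?g0"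
      by (simp add: inner_vec_def algebra_simps)
    finally show "(1/2) * (M h \<bullet> (M x - y) + (M x - y) \<bullet> M h) = h \<bullet> ?g0" .
  qed
  with d1 eq have d: "GDERIV (\<lambda>z. (1/2) * (norm (A *v (\<chi> i. z$i * P i) - y))\<^sup>2) x :> ?g0"
    by (simp add: gderiv_def)
  have "(\<lambda>h. h \<bullet> g) = (\<lambda>h. h \<bullet> ?g0)"
    using has_derivative_unique assms d unfolding gderiv_def by blast
  then have "(g - ?g0) \<bullet> g = (g - ?g0) \<bullet> ?g0" by metis
  then have "(g - ?g0) \<bullet> (g - ?g0) = 0" by (simp add: inner_diff_right)
  then show ?thesis by (simp add: M_def)
qed




lemma cont_from_deriv:
  fixes h :: "real \<Rightarrow> 'a::real_normed_vector"
  assumes "\<forall>t\<ge>0. (h has_vector_derivative h' t) (at t within {0..})"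
  shows "continuous_on {0..} h"
  unfolding continuous_on_eq_continuous_within
proof
  fix x :: real assume "x \<in> {0..}"
  then show "continuous (at x within {0..}) h"
    using assms has_vector_derivative_continuous[of h "h' x" x "{0..}"] by auto
qed

lemma cont_from_rderiv:
  fixes h :: "real \<Rightarrow> real"
  assumes "\<forall>t\<ge>0. (h has_real_derivative h' t) (at t within {0..})"
  shows "continuous_on {0..} h"
  unfolding continuous_on_eq_continuous_within
proof
  fix x :: real assume "x \<in> {0..}"
  then show "continuous (at x within {0..}) h"
    using assms DERIV_continuous[of h "h' x" x "{0..}"] by auto
qed

lemma interior_deriv:
  assumes "(h has_real_derivative d) (at t within {0..})" "0 < t"
  shows "(h has_real_derivative d) (at t)"
proof -
  have "at t within {0..} = at t" by (rule at_within_interior) (use assms(2) in simp)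
  then show ?thesis using assms(1) by simp
qed

lemma mono_dec:
  fixes h h' :: "real \<Rightarrow> real"
  assumes "\<forall>t\<ge>0. (h has_real_derivative h' t) (at t within {0..})"
    and "\<forall>t. a < t \<and> t < b \<longrightarrow> h' t \<le> 0" and "0 \<le> a" and "a \<le> b"
  shows "h b \<le> h a"
proof -
  have 1: "\<exists>y. (h has_real_derivative y) (at x) \<and> y \<le> 0" if "a < x" "x < b" for x
    using assms that interior_deriv[of h "h' x" x] by force
  have 2: "continuous_on {a..b} h"
    by (rule continuous_on_subset[OF cont_from_rderiv[OF assms(1)]]) (use assms(3) in auto)
  show ?thesis using DERIV_nonpos_imp_decreasing_open[OF assms(4) 1 2] by blast
qed

lemma mono_inc:
  fixes h h' :: "real \<Rightarrow> real"
  assumes "\<forall>t\<ge>0. (h has_real_derivative h' t) (at t within {0..})"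
    and "\<forall>t. a < t \<and> t < b \<longrightarrow> h' t \<ge> 0" and "0 \<le> a" and "a \<le> b"
  shows "h a \<le> h b"
proof -
  have "(\<lambda>t. - h t) b \<le> (\<lambda>t. - h t) a"
  proof (rule mono_dec[where h="\<lambda>t. - h t" and h'="\<lambda>t. - h' t"])
    show "\<forall>t\<ge>0. ((\<lambda>t. - h t) has_real_derivative - h' t) (at t within {0..})"
      using assms(1) DERIV_minus by blast
  qed (use assms in auto)
  then show ?thesis by simp
qed

lemma vec_deriv_from_comp:
  fixes f :: "real \<Rightarrow> real^'n"
  assumes "\<And>i. ((\<lambda>t. f t $ i) has_real_derivative f' $ i) (at t within S)"
  shows "(f has_vector_derivative f') (at t within S)"
  unfolding has_vector_derivative_def
proof (subst has_derivative_componentwise_within, intro ballI)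
  fix b :: "real^'n" assume "b \<in> Basis"
  then obtain i where b: "b = axis i 1" by (auto simp: Basis_vec_def)
  show "((\<lambda>x. f x \<bullet> b) has_derivative (\<lambda>x. (x *\<^sub>R f') \<bullet> b)) (at t within S)"
    using assms[of i] unfolding b has_field_derivative_def
    by (simp add: inner_axis mult.commute[of _ "f' $ i"])
qed




definition psi :: "nat \<Rightarrow> real \<Rightarrow> real" where
  "psi L w = (if L = 2 then ln w else - 1 / ((real L - 2) * w ^ (L - 2)))"

definition phi :: "nat \<Rightarrow> real \<Rightarrow> real \<Rightarrow> real" where
  "phi L c w = w\<^sup>2 / 2 - c * psi L w"

lemma aux_cancel: "(c::real) \<noteq> 0 \<Longrightarrow> (- 1 / c) * (- (c * a * b)) = a * b"
  by (simp add: field_simps)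

lemma psi_deriv:
  assumes "L \<ge> 2" "w > 0"
  shows "(psi L has_real_derivative 1 / w ^ (L - 1)) (at w)"
proof (cases "L = 2")
  case True
  then have "psi L = ln" by (auto simp: psi_def fun_eq_iff)
  then show ?thesis using True assms DERIV_ln[of w] by (simp add: divide_inverse)
next
  case False
  then have L3: "L \<ge> 3" using assms by auto
  then obtain m where m: "L = m + 3" by (metis add.commute le_iff_add)
  have eq: "psi L = (\<lambda>w. - 1 / ((real m + 1) * w ^ (m + 1)))"
    using m by (auto simp: psi_def fun_eq_iff)
  have d0: "((\<lambda>w. w ^ (m + 1)) has_real_derivative real (m + 1) * w ^ m) (at w)"
    using DERIV_pow[of "m+1" w] by simp
  have d1: "((\<lambda>w. inverse (w ^ (m + 1))) has_real_derivative
      - (real (m + 1) * w ^ m * inverse ((w ^ (m + 1))\<^sup>2))) (at w)"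
    using DERIV_inverse_fun[OF d0] assms(2) by (simp add: power2_eq_square)
  have d2: "((\<lambda>w. (- 1 / (real m + 1)) * inverse (w ^ (m + 1))) has_real_derivative
      (- 1 / (real m + 1)) * (- (real (m + 1) * w ^ m * inverse ((w ^ (m + 1))\<^sup>2)))) (at w)"
    by (rule DERIV_cmult[OF d1])
  have e1: "(\<lambda>w. (- 1 / (real m + 1)) * inverse (w ^ (m + 1))) = (\<lambda>w. - 1 / ((real m + 1) * w ^ (m + 1)))"
    by (auto simp: fun_eq_iff field_simps)
  have e2: "(- 1 / (real m + 1)) * (- (real (m + 1) * w ^ m * inverse ((w ^ (m + 1))\<^sup>2))) = 1 / w ^ (m + 2)"
  proof -
    have r: "real (m + 1) = real m + 1" by simp
    have "(- 1 / (real m + 1)) * (- (real (m + 1) * w ^ m * inverse ((w ^ (m + 1))\<^sup>2)))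
        = w ^ m * inverse ((w ^ (m + 1))\<^sup>2)" unfolding r by (rule aux_cancel) simp
    also have "\<dots> = w ^ m * inverse (w ^ m * w ^ (m + 2))"
      by (simp add: power2_eq_square power_add)
    also have "\<dots> = 1 / w ^ (m + 2)"
      using assms(2) by (simp add: divide_inverse)
    finally show ?thesis .
  qed
  have "((\<lambda>w. - 1 / ((real m + 1) * w ^ (m + 1))) has_real_derivative 1 / w ^ (m + 2)) (at w)"
    using d2 unfolding e1 e2 .
  then show ?thesis using eq m by (simp add: numeral_eq_Suc)
qed

lemma phi_deriv:
  assumes "L \<ge> 2" "w > 0"
  shows "(phi L c has_real_derivative (w - c / w ^ (L - 1))) (at w)"
proof -
  have "((\<lambda>w. w\<^sup>2 / 2 - c * psi L w) has_real_derivative (w - c * (1 / w ^ (L - 1)))) (at w)"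
    by (auto intro!: derivative_eq_intros psi_deriv[OF assms])
  then show ?thesis by (simp add: phi_def[abs_def])
qed

lemma phi_lower:
  assumes "L \<ge> 2" "w > 0" "c \<ge> 0"
  shows "phi L c w \<ge> w\<^sup>2 / 2 - c * w"
proof (cases "L = 2")
  case True
  have "ln w \<le> w" using ln_le_minus_one[OF assms(2)] by linarith
  then have "c * ln w \<le> c * w" using assms(3) by (simp add: mult_left_mono)
  then show ?thesis using True by (simp add: phi_def psi_def)
next
  case False
  have "(real L - 2) * w ^ (L - 2) > 0" using False assms by auto
  then have "psi L w \<le> 0" using False by (simp add: psi_def)
  then have "c * psi L w \<le> 0" using assms(3) by (simp add: mult_nonneg_nonpos)
  moreover have "0 \<le> c * w" using assms by simp
  ultimately have "c * psi L w \<le> c * w" by linarith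
  then show ?thesis by (simp add: phi_def)
qed

lemma phi_strong:
  assumes "L \<ge> 2" "w > 0" "v \<ge> 0"
  shows "phi L (v ^ L) w - phi L (v ^ L) v \<ge> (w - v)\<^sup>2 / 2"
proof (cases "v = 0")
  case True
  then show ?thesis using assms by (simp add: phi_def zero_power)
next
  case False
  then have v: "v > 0" using assms by auto
  define g where "g s = phi L (v ^ L) s - (s - v)\<^sup>2 / 2" for s
  have gd: "(g has_real_derivative (v - v ^ L / s ^ (L - 1))) (at s)" if "s > 0" for s
  proof -
    have "(g has_real_derivative ((s - v ^ L / s ^ (L - 1)) - (s - v))) (at s)"
      unfolding g_def[abs_def]
      by (auto intro!: derivative_eq_intros phi_deriv[OF assms(1) that] simp: field_simps)
    then show ?thesis by (simp add: field_simps)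
  qed
  have vL: "v ^ L = v * v ^ (L - 1)"
  proof -
    have "L = Suc (L - 1)" using assms(1) by simp
    then show ?thesis by (metis power_Suc)
  qed
  have cont: "continuous_on {a..b} g" if "a > 0" for a b
  proof (rule continuous_at_imp_continuous_on, intro ballI)
    fix x assume "x \<in> {a..b}"
    then have "x > 0" using that by simp
    then show "isCont g x" using gd DERIV_isCont by blast
  qed
  have "g v \<le> g w"
  proof (cases "v \<le> w")
    case True
    show ?thesis
    proof (rule DERIV_nonneg_imp_increasing_open[OF True _ cont[OF v]])
      fix x assume x: "v < x" "x < w"
      have "v ^ (L - 1) \<le> x ^ (L - 1)" using x v by (simp add: power_mono)
      then have "v ^ L / x ^ (L - 1) \<le> v" using x v vL
        by (simp add: divide_le_eq mult_left_mono)
      then show "\<exists>y. (g has_real_derivative y) (at x) \<and> 0 \<le> y"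
        using gd[of x] x v by auto
    qed
  next
    case False
    show ?thesis
    proof (rule DERIV_nonpos_imp_decreasing_open[of w v g, OF _ _ cont[OF assms(2)]])
      show "w \<le> v" using False by simp
      fix x assume x: "w < x" "x < v"
      have "x ^ (L - 1) \<le> v ^ (L - 1)" using x assms(2) by (simp add: power_mono)
      moreover have "x ^ (L - 1) > 0" using x assms(2) by simp
      ultimately have "1 \<le> v ^ (L - 1) / x ^ (L - 1)" by simp
      then have "v * 1 \<le> v * (v ^ (L - 1) / x ^ (L - 1))" using v by (simp only: mult_left_mono)
      then have "v ^ L / x ^ (L - 1) \<ge> v" using vL by simp
      then show "\<exists>y. (g has_real_derivative y) (at x) \<and> y \<le> 0"
        using gd[of x] x assms(2) by auto
    qed
  qed
  then show ?thesis by (simp add: g_def)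
qed




lemma proj_ineq:
  fixes A :: "real^'n^'m"
  assumes z: "z \<in> NNLS_sol A y" and w: "\<forall>i. 0 \<le> w $ i"
  shows "(norm (A *v w - A *v z))\<^sup>2 \<le> (norm (A *v w - y))\<^sup>2 - (norm (A *v z - y))\<^sup>2"
proof -
  define e where "e = A *v z - y"
  define d where "d = A *v w - A *v z"
  have zn: "\<forall>i. 0 \<le> z $ i" and zmin: "\<And>v. \<forall>i. 0 \<le> v $ i \<Longrightarrow> (norm (A *v z - y))\<^sup>2 \<le> (norm (A *v v - y))\<^sup>2"
    using z by (auto simp: NNLS_sol_def)
  have key: "0 \<le> 2 * (e \<bullet> d) + s * (d \<bullet> d)" if s: "0 < s" "s \<le> 1" for s
  proof -
    define v where "v = z + s *\<^sub>R (w - z)"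
    have "\<forall>i. 0 \<le> v $ i"
    proof
      fix i
      have "v $ i = (1 - s) * z $ i + s * w $ i" by (simp add: v_def algebra_simps)
      then show "0 \<le> v $ i" using s zn w by simp
    qed
    then have "(norm (A *v z - y))\<^sup>2 \<le> (norm (A *v v - y))\<^sup>2" by (rule zmin)
    moreover have "A *v v - y = e + s *\<^sub>R d"
      by (simp add: v_def e_def d_def algebra_simps)
    ultimately have "e \<bullet> e \<le> (e + s *\<^sub>R d) \<bullet> (e + s *\<^sub>R d)"
      by (simp add: e_def power2_norm_eq_inner)
    then have "0 \<le> s * (2 * (e \<bullet> d) + s * (d \<bullet> d))"
      by (simp add: inner_add_left inner_add_right inner_commute algebra_simps)
    then show ?thesis using s by (simp add: zero_le_mult_iff)
  qed
  have p: "e \<bullet> d \<ge> 0"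
  proof (rule ccontr)
    assume "\<not> e \<bullet> d \<ge> 0"
    then have neg: "e \<bullet> d < 0" by simp
    show False
    proof (cases "d \<bullet> d = 0")
      case True
      then show ?thesis using key[of 1] neg by simp
    next
      case False
      then have q: "d \<bullet> d > 0" by (simp add: order_le_neq_trans[OF inner_ge_zero] )
      define s where "s = min 1 (- (e \<bullet> d) / (d \<bullet> d))"
      have "0 < - (e \<bullet> d)" using neg by simp
      then have "0 < - (e \<bullet> d) / (d \<bullet> d)" using q by (rule divide_pos_pos)
      then have s0: "0 < s" by (simp add: s_def)
      have "s * (d \<bullet> d) \<le> - (e \<bullet> d)"
        using q by (simp add: s_def min_def field_simps)
      then show False using key[of s] s0 neg by (simp add: s_def)
    qed
  qed
  have "A *v w - y = e + d" by (simp add: e_def d_def)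
  then have "(norm (A *v w - y))\<^sup>2 = e \<bullet> e + 2 * (e \<bullet> d) + d \<bullet> d"
    by (simp add: power2_norm_eq_inner inner_add_left inner_add_right inner_commute)
  then show ?thesis using p by (simp add: d_def e_def power2_norm_eq_inner)
qed

lemma exists_min:
  fixes A :: "real^'n^'m"
  shows "\<exists>z. z \<in> NNLS_sol A y"
proof -
  define P where "P = {z::real^'n. \<forall>i. 0 \<le> z $ i}"
  define K where "K = (\<lambda>z. A *v z) ` P"
  define S where "S = range (\<lambda>i. column i A)"
  have "finite S" by (simp add: S_def)
  then have cl: "closed (convex_cone hull S)" by (rule closed_convex_cone_hull)
  have sub1: "K \<subseteq> convex_cone hull S"
  proof
    fix x assume "x \<in> K"
    then obtain z where z: "z \<in> P" "x = A *v z" by (auto simp: K_def)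
    have "\<And>F. finite F \<Longrightarrow> (\<Sum>i\<in>F. z $ i *\<^sub>R column i A) \<in> convex_cone hull S"
    proof -
      fix F :: "'n set" assume "finite F"
      then show "(\<Sum>i\<in>F. z $ i *\<^sub>R column i A) \<in> convex_cone hull S"
      proof (induction F rule: finite_induct)
        case empty
        then show ?case by (simp add: convex_cone_hull_contains_0)
      next
        case (insert i F)
        have "column i A \<in> convex_cone hull S" by (rule hull_inc) (simp add: S_def)
        then have "z $ i *\<^sub>R column i A \<in> convex_cone hull S"
          using z(1) by (simp add: P_def convex_cone_hull_mul)
        then show ?case using insert by (simp add: convex_cone_hull_add)
      qed
    qed
    moreover have "x = (\<Sum>i\<in>UNIV. z $ i *\<^sub>R column i A)"
      using z(2) by (simp add: matrix_mult_sum scalar_mult_eq_scaleR)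
    ultimately show "x \<in> convex_cone hull S" by simp
  qed
  have sub2: "convex_cone hull S \<subseteq> K"
  proof (rule hull_minimal)
    show "S \<subseteq> K"
    proof
      fix x assume "x \<in> S"
      then obtain i where "x = column i A" by (auto simp: S_def)
      then have "x = A *v axis i 1" by (simp add: matrix_vector_mult_basis)
      moreover have "axis i 1 \<in> P" by (simp add: P_def axis_def)
      ultimately show "x \<in> K" by (simp add: K_def)
    qed
    show "convex_cone K"
      unfolding convex_cone_iff
    proof (intro conjI ballI allI impI)
      show "0 \<in> K" unfolding K_def P_def by (rule image_eqI[of _ _ 0]) auto
    next
      fix a b assume "a \<in> K" "b \<in> K"
      then obtain za zb where "za \<in> P" "zb \<in> P" "a = A *v za" "b = A *v zb" by (auto simp: K_def)
      then show "a + b \<in> K" unfolding K_def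
        by (intro image_eqI[of _ _ "za + zb"]) (auto simp: P_def matrix_vector_right_distrib)
    next
      fix a and c :: real assume "a \<in> K" "0 \<le> c"
      then obtain za where "za \<in> P" "a = A *v za" by (auto simp: K_def)
      then show "c *\<^sub>R a \<in> K" unfolding K_def using \<open>0 \<le> c\<close>
        by (intro image_eqI[of _ _ "c *\<^sub>R za"]) (auto simp: P_def matrix_vector_mult_scaleR)
    qed
  qed
  have clK: "closed K" using sub1 sub2 cl by (metis subset_antisym)
  have "(0::real^'n) \<in> P" by (simp add: P_def)
  then have neK: "K \<noteq> {}" unfolding K_def by blast
  define p where "p = closest_point K y"
  have pK: "p \<in> K" and pmin: "\<forall>q\<in>K. dist y p \<le> dist y q"
    using closest_point_exists[OF clK neK, of y] by (auto simp: p_def)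
  obtain z where zP: "z \<in> P" and pz: "p = A *v z" using pK by (auto simp: K_def)
  have "z \<in> NNLS_sol A y"
    unfolding NNLS_sol_def
  proof (intro CollectI conjI allI impI)
    show "0 \<le> z $ i" for i using zP by (simp add: P_def)
    fix v :: "real^'n" assume "\<forall>i. 0 \<le> v $ i"
    then have "A *v v \<in> K" by (simp add: K_def P_def)
    then have "dist y p \<le> dist y (A *v v)" using pmin by blast
    then have "norm (A *v z - y) \<le> norm (A *v v - y)" by (simp add: pz dist_norm norm_minus_commute)
    then show "(norm (A *v z - y))\<^sup>2 \<le> (norm (A *v v - y))\<^sup>2" by (simp add: power_mono)
  qed
  then show ?thesis by blast
qed





definition xu :: "nat \<Rightarrow> (real \<Rightarrow> real^'n) \<Rightarrow> real \<Rightarrow> real^'n" where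
  "xu L u t = (\<chi> i. u t $ i ^ L)"

definition rr :: "nat \<Rightarrow> real^'n^'m \<Rightarrow> real^'m \<Rightarrow> (real \<Rightarrow> real^'n) \<Rightarrow> real \<Rightarrow> real^'n" where
  "rr L A y u t = transpose A *v (A *v xu L u t - y)"

definition DD :: "nat \<Rightarrow> real^'n \<Rightarrow> (real \<Rightarrow> real^'n) \<Rightarrow> real \<Rightarrow> real" where
  "DD L z u t = (\<Sum>i\<in>UNIV. phi L (z $ i) (u t $ i))"

lemma transpose_mult: "transpose A *v e = e v* (A::real^'n^'m)"
  by (metis transpose_transpose vector_transpose_matrix)

locale flow =
  fixes L :: nat and A :: "real^'n^'m" and y :: "real^'m" and u :: "real \<Rightarrow> real^'n"
  assumes L2: "L \<ge> 2"
    and upos: "\<forall>t\<ge>0. \<forall>i. 0 < u t $ i"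
    and uder: "\<forall>t\<ge>0. \<forall>i. ((\<lambda>t. u t $ i) has_real_derivative
                 - (u t $ i ^ (L - 1) * rr L A y u t $ i)) (at t within {0..})"
begin

abbreviation "X \<equiv> xu L u"
abbreviation "r \<equiv> rr L A y u"
abbreviation "F t \<equiv> (norm (A *v X t - y))\<^sup>2"
abbreviation "f z \<equiv> (norm (A *v z - y))\<^sup>2"
definition "X' t = (\<chi> i. - (real L * u t $ i ^ (L - 1) * (u t $ i ^ (L - 1) * r t $ i)))"

lemma X_deriv:
  assumes "t \<ge> 0"
  shows "(X has_vector_derivative X' t) (at t within {0..})"
proof (rule vec_deriv_from_comp)
  fix i
  have "((\<lambda>t. (u t $ i) ^ L) has_real_derivative
      (real L * (u t $ i) ^ (L - Suc 0)) * (- (u t $ i ^ (L - 1) * r t $ i))) (at t within {0..})"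
    by (rule DERIV_chain2[OF DERIV_pow]) (use uder assms in auto)
  then show "((\<lambda>t. X t $ i) has_real_derivative X' t $ i) (at t within {0..})"
    by (simp add: xu_def X'_def)
qed

lemma X_nonneg: "t \<ge> 0 \<Longrightarrow> 0 \<le> X t $ i"
  using upos by (simp add: xu_def less_imp_le)

lemma F_deriv:
  assumes "t \<ge> 0"
  shows "((\<lambda>t. F t) has_real_derivative 2 * (r t \<bullet> X' t)) (at t within {0..})"
proof -
  have dX: "(X has_derivative (\<lambda>h. h *\<^sub>R X' t)) (at t within {0..})"
    using X_deriv[OF assms] by (simp add: has_vector_derivative_def)
  have dAX: "((\<lambda>t. A *v X t - y) has_derivative (\<lambda>h. A *v (h *\<^sub>R X' t))) (at t within {0..})"
    by (auto intro!: derivative_eq_intros bounded_linear.has_derivative[OF matrix_vector_mul_bounded_linear] dX)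
  have "((\<lambda>t. (A *v X t - y) \<bullet> (A *v X t - y)) has_derivative
      (\<lambda>h. (A *v X t - y) \<bullet> (A *v (h *\<^sub>R X' t)) + (A *v (h *\<^sub>R X' t)) \<bullet> (A *v X t - y))) (at t within {0..})"
    by (rule has_derivative_inner[OF dAX dAX])
  moreover have "(\<lambda>h. (A *v X t - y) \<bullet> (A *v (h *\<^sub>R X' t)) + (A *v (h *\<^sub>R X' t)) \<bullet> (A *v X t - y))
      = (\<lambda>h. 2 * (r t \<bullet> X' t) * h)"
  proof
    fix h
    have "(A *v X t - y) \<bullet> (A *v X' t) = r t \<bullet> X' t"
      by (simp add: rr_def transpose_mult dot_lmul_matrix)
    then show "(A *v X t - y) \<bullet> (A *v (h *\<^sub>R X' t)) + (A *v (h *\<^sub>R X' t)) \<bullet> (A *v X t - y)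
        = 2 * (r t \<bullet> X' t) * h"
      by (simp add: matrix_vector_mult_scaleR inner_commute)
  qed
  ultimately show ?thesis
    by (simp add: has_field_derivative_def power2_norm_eq_inner)
qed

lemma F'_nonpos: "r t \<bullet> X' t \<le> 0"
proof -
  have "r t \<bullet> X' t = (\<Sum>i\<in>UNIV. - (real L * (u t $ i ^ (L - 1) * r t $ i)\<^sup>2))"
    by (simp add: inner_vec_def X'_def power2_eq_square algebra_simps)
  also have "\<dots> \<le> 0" by (rule sum_nonpos) simp
  finally show ?thesis .
qed

lemma D_deriv:
  assumes "t \<ge> 0"
  shows "((\<lambda>t. DD L z u t) has_real_derivative - ((X t - z) \<bullet> r t)) (at t within {0..})"
proof -
  have "((\<lambda>t. DD L z u t) has_real_derivative
     (\<Sum>i\<in>UNIV. (u t $ i - z $ i / u t $ i ^ (L - 1)) * (- (u t $ i ^ (L - 1) * r t $ i)))) (at t within {0..})"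
    unfolding DD_def
    by (rule DERIV_sum, rule DERIV_chain2[OF phi_deriv[OF L2]]) (use upos uder assms in auto)
  moreover have "(\<Sum>i\<in>UNIV. (u t $ i - z $ i / u t $ i ^ (L - 1)) * (- (u t $ i ^ (L - 1) * r t $ i)))
      = - ((X t - z) \<bullet> r t)"
  proof -
    have "(u t $ i - z $ i / u t $ i ^ (L - 1)) * (- (u t $ i ^ (L - 1) * r t $ i))
        = - ((X t $ i - z $ i) * r t $ i)" for i
    proof -
      have p: "u t $ i ^ (L - 1) > 0" using upos assms by simp
      have L: "u t $ i ^ L = u t $ i * u t $ i ^ (L - 1)"
      proof -
        have "L = Suc (L - 1)" using L2 by simp
        then show ?thesis by (metis power_Suc)
      qed
      have p0: "u t $ i > 0" using upos assms by simp
      show ?thesis using p p0 by (simp add: xu_def L field_simps)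
    qed
    then have "(\<Sum>i\<in>UNIV. (u t $ i - z $ i / u t $ i ^ (L - 1)) * (- (u t $ i ^ (L - 1) * r t $ i)))
        = (\<Sum>i\<in>UNIV. - ((X t $ i - z $ i) * r t $ i))" by (rule sum.cong[OF refl])
    also have "\<dots> = - ((X t - z) \<bullet> r t)" by (simp add: inner_vec_def sum_negf)
    finally show ?thesis .
  qed
  ultimately show ?thesis by simp
qed

lemma identity: "f z = F t + 2 * (r t \<bullet> (z - X t)) + (norm (A *v (z - X t)))\<^sup>2"
proof -
  have eq: "A *v z - y = (A *v X t - y) + A *v (z - X t)" by (simp add: matrix_vector_mult_diff_distrib)
  have "f z = (norm ((A *v X t - y) + A *v (z - X t)))\<^sup>2" by (subst eq) (rule refl)
  also have "\<dots> = F t + 2 * ((A *v X t - y) \<bullet> (A *v (z - X t))) + (norm (A *v (z - X t)))\<^sup>2"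
    by (simp add: power2_norm_eq_inner inner_add_left inner_add_right inner_commute)
  also have "(A *v X t - y) \<bullet> (A *v (z - X t)) = r t \<bullet> (z - X t)"
    by (simp add: rr_def transpose_mult dot_lmul_matrix)
  finally show ?thesis .
qed


lemma E_mono:
  assumes "t \<ge> 0"
  shows "t * (F t - f z) + 2 * DD L z u t \<le> 2 * DD L z u 0"
proof -
  define E' where "E' s = 1 * (F s - f z) + (2 * (r s \<bullet> X' s) - 0) * s + 2 * - ((X s - z) \<bullet> r s)" for s
  have d: "\<forall>s\<ge>0. ((\<lambda>s. s * (F s - f z) + 2 * DD L z u s) has_real_derivative E' s) (at s within {0..})"
  proof (intro allI impI)
    fix s :: real assume s: "s \<ge> 0"
    show "((\<lambda>s. s * (F s - f z) + 2 * DD L z u s) has_real_derivative E' s) (at s within {0..})"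
      unfolding E'_def
      by (rule DERIV_add[OF DERIV_mult[OF DERIV_ident DERIV_diff[OF F_deriv[OF s] DERIV_const]] DERIV_cmult[OF D_deriv[OF s]]])
  qed
  have n: "\<forall>s. 0 < s \<and> s < t \<longrightarrow> E' s \<le> 0"
  proof (intro allI impI)
    fix s :: real assume s: "0 < s \<and> s < t"
    have id: "f z = F s + 2 * (r s \<bullet> (z - X s)) + (norm (A *v (z - X s)))\<^sup>2" by (rule identity)
    have "(X s - z) \<bullet> r s = - (r s \<bullet> (z - X s))" by (simp add: inner_commute inner_diff_left inner_diff_right)
    then have "E' s = 2 * s * (r s \<bullet> X' s) - (norm (A *v (z - X s)))\<^sup>2"
      using id by (simp add: E'_def algebra_simps)
    moreover have "s * (r s \<bullet> X' s) \<le> 0" using s F'_nonpos[of s] by (simp add: mult_nonneg_nonpos)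
    moreover have "0 \<le> (norm (A *v (z - X s)))\<^sup>2" by simp
    ultimately show "E' s \<le> 0" by linarith
  qed
  have "(\<lambda>s. s * (F s - f z) + 2 * DD L z u s) t \<le> (\<lambda>s. s * (F s - f z) + 2 * DD L z u s) 0"
    by (rule mono_dec[OF d n]) (use assms in auto)
  then show ?thesis by simp
qed

lemma D_lower1:
  assumes "\<forall>i. 0 \<le> z $ i" "t \<ge> 0"
  shows "(\<Sum>i\<in>UNIV. (u t $ i)\<^sup>2 / 2 - z $ i * u t $ i) \<le> DD L z u t"
  unfolding DD_def by (rule sum_mono) (use phi_lower[OF L2] upos assms in auto)

lemma D_lower2: "(\<Sum>i\<in>UNIV. - ((z::real^'n) $ i)\<^sup>2 / 2) \<le> (\<Sum>i\<in>UNIV. (w $ i)\<^sup>2 / 2 - z $ i * w $ i)"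
proof (rule sum_mono)
  fix i
  have "0 \<le> (w $ i - z $ i)\<^sup>2" by simp
  then show "- (z $ i)\<^sup>2 / 2 \<le> (w $ i)\<^sup>2 / 2 - z $ i * w $ i" by (simp add: power2_eq_square algebra_simps)
qed

definition "C0 z = 2 * DD L z u 0 + (\<Sum>i\<in>UNIV. (z $ i)\<^sup>2)"

lemma D_lower:
  assumes "\<forall>i. 0 \<le> z $ i" "t \<ge> 0"
  shows "(\<Sum>i\<in>UNIV. - (z $ i)\<^sup>2 / 2) \<le> DD L z u t"
  using D_lower1[OF assms] D_lower2[of z "u t"] by linarith

lemma sum_half: "(\<Sum>i\<in>UNIV. - ((z::real^'n) $ i)\<^sup>2 / 2) = - (\<Sum>i\<in>UNIV. (z $ i)\<^sup>2) / 2"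
  by (simp add: sum_negf sum_divide_distrib)

lemma C0_nonneg: "\<forall>i. 0 \<le> z $ i \<Longrightarrow> C0 z \<ge> 0"
  using D_lower[of z 0] sum_half[of z] by (simp add: C0_def)

lemma rate:
  assumes "\<forall>i. 0 \<le> z $ i" "t > 0"
  shows "F t - f z \<le> C0 z / t"
proof -
  have "t * (F t - f z) \<le> C0 z"
    using E_mono[of t z] D_lower[of z t] sum_half[of z] assms by (simp add: C0_def)
  then show ?thesis using assms(2) by (simp add: pos_le_divide_eq mult.commute)
qed

lemma F_ge_min: "z \<in> NNLS_sol A y \<Longrightarrow> t \<ge> 0 \<Longrightarrow> f z \<le> F t"
  using X_nonneg by (auto simp: NNLS_sol_def)

lemma D_mono_min:
  assumes z: "z \<in> NNLS_sol A y" and "0 \<le> s" "s \<le> t"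
  shows "DD L z u t \<le> DD L z u s"
proof (rule mono_dec[where h="\<lambda>t. DD L z u t" and h'="\<lambda>t. - ((X t - z) \<bullet> r t)"])
  show "\<forall>t\<ge>0. ((\<lambda>t. DD L z u t) has_real_derivative - ((X t - z) \<bullet> r t)) (at t within {0..})"
    using D_deriv by blast
  show "\<forall>t'. s < t' \<and> t' < t \<longrightarrow> - ((X t' - z) \<bullet> r t') \<le> 0"
  proof (intro allI impI)
    fix t' assume t': "s < t' \<and> t' < t"
    have id: "f z = F t' + 2 * (r t' \<bullet> (z - X t')) + (norm (A *v (z - X t')))\<^sup>2" by (rule identity)
    have "f z \<le> F t'" using F_ge_min[OF z] t' assms by simp
    moreover have "(X t' - z) \<bullet> r t' = - (r t' \<bullet> (z - X t'))" by (simp add: inner_commute inner_diff_left inner_diff_right)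
    moreover have "0 \<le> (norm (A *v (z - X t')))\<^sup>2" by simp
    ultimately show "- ((X t' - z) \<bullet> r t') \<le> 0" using id by linarith
  qed
qed (use assms in auto)

lemma abs_le_sq: "\<bar>w::real\<bar> \<le> 1 + w\<^sup>2"
proof (cases "\<bar>w\<bar> \<le> 1")
  case True then show ?thesis using zero_le_power2[of w] by linarith
next
  case False
  then have "\<bar>w\<bar> * 1 \<le> \<bar>w\<bar> * \<bar>w\<bar>" by (intro mult_left_mono) auto
  then show ?thesis by (simp add: power2_eq_square)
qed

lemma bounded_u:
  assumes z: "z \<in> NNLS_sol A y"
  shows "\<exists>R. \<forall>t\<ge>0. norm (u t) \<le> R"
proof -
  have zn: "\<forall>i. 0 \<le> z $ i" using z by (simp add: NNLS_sol_def)
  define B where "B = DD L z u 0 + (\<Sum>i\<in>UNIV. (z $ i)\<^sup>2 / 2)"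
  define R where "R = (\<Sum>i\<in>UNIV. \<bar>z $ i\<bar> + 1 + 2 * B)"
  have "norm (u t) \<le> R" if t: "t \<ge> 0" for t
  proof -
    have comp: "\<bar>u t $ i\<bar> \<le> \<bar>z $ i\<bar> + 1 + 2 * B" for i
    proof -
      have "(u t $ i - z $ i)\<^sup>2 / 2 \<le> (\<Sum>j\<in>UNIV. (u t $ j - z $ j)\<^sup>2 / 2)"
        by (rule member_le_sum) auto
      also have "\<dots> = (\<Sum>j\<in>UNIV. (u t $ j)\<^sup>2 / 2 - z $ j * u t $ j) + (\<Sum>j\<in>UNIV. (z $ j)\<^sup>2 / 2)"
      proof -
        have "(\<Sum>j\<in>UNIV. (u t $ j - z $ j)\<^sup>2 / 2) = (\<Sum>j\<in>UNIV. ((u t $ j)\<^sup>2 / 2 - z $ j * u t $ j) + (z $ j)\<^sup>2 / 2)"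
          by (rule sum.cong) (auto simp: power2_eq_square field_simps)
        then show ?thesis by (simp add: sum.distrib)
      qed
      also have "\<dots> \<le> DD L z u t + (\<Sum>j\<in>UNIV. (z $ j)\<^sup>2 / 2)"
        using D_lower1[OF zn t] by simp
      also have "\<dots> \<le> B" using D_mono_min[OF z, of 0 t] t by (simp add: B_def)
      finally have "(u t $ i - z $ i)\<^sup>2 \<le> 2 * B" by simp
      moreover have "\<bar>u t $ i - z $ i\<bar> \<le> 1 + (u t $ i - z $ i)\<^sup>2" by (rule abs_le_sq)
      ultimately show ?thesis by linarith
    qed
    have "norm (u t) \<le> (\<Sum>i\<in>UNIV. \<bar>u t $ i\<bar>)" by (rule norm_le_l1_cart)
    also have "\<dots> \<le> R" unfolding R_def by (rule sum_mono) (rule comp)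
    finally show ?thesis .
  qed
  then show ?thesis by blast
qed


lemma norm_sq_sum: "(norm (v::real^'n))\<^sup>2 = (\<Sum>i\<in>UNIV. (v $ i)\<^sup>2)"
  unfolding power2_norm_eq_inner inner_vec_def by (simp add: power2_eq_square)

theorem flow_main:
  shows "\<exists>xinf. (X \<longlongrightarrow> xinf) at_top \<and> xinf \<in> NNLS_sol A y \<and>
           (\<exists>C>0. \<forall>xp\<in>NNLS_sol A y. \<forall>t>0. (norm (A *v X t - A *v xp))\<^sup>2 \<le> C / t)"
proof -
  obtain zs where zs: "zs \<in> NNLS_sol A y" using exists_min by blast
  have zsn: "\<forall>i. 0 \<le> zs $ i" using zs by (simp add: NNLS_sol_def)
  have rateP: "\<exists>C>0. \<forall>xp\<in>NNLS_sol A y. \<forall>t>0. (norm (A *v X t - A *v xp))\<^sup>2 \<le> C / t"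
  proof (intro exI[of _ "C0 zs + 1"] conjI ballI allI impI)
    show "C0 zs + 1 > 0" using C0_nonneg[OF zsn] by simp
    fix xp and t :: real assume xp: "xp \<in> NNLS_sol A y" and t: "0 < t"
    have "f xp \<le> f zs" using xp zsn by (simp add: NNLS_sol_def)
    moreover have "f zs \<le> f xp" using zs xp by (simp add: NNLS_sol_def)
    ultimately have fe: "f xp = f zs" by simp
    have "(norm (A *v X t - A *v xp))\<^sup>2 \<le> F t - f xp"
      using proj_ineq[OF xp, of "X t"] X_nonneg t by simp
    also have "\<dots> \<le> C0 zs / t" using rate[OF zsn t] fe by simp
    also have "\<dots> \<le> (C0 zs + 1) / t" using t by (simp add: divide_right_mono)
    finally show "(norm (A *v X t - A *v xp))\<^sup>2 \<le> (C0 zs + 1) / t" .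
  qed
  obtain R where R: "\<forall>t\<ge>0. norm (u t) \<le> R" using bounded_u[OF zs] by blast
  have "bounded (range (\<lambda>n::nat. u (real n)))" unfolding bounded_iff
  proof (intro exI[of _ R] ballI)
    fix x assume "x \<in> range (\<lambda>n::nat. u (real n))"
    then obtain n :: nat where "x = u (real n)" by blast
    then show "norm x \<le> R" using R by simp
  qed
  then obtain ub \<sigma> where \<sigma>: "strict_mono \<sigma>" and lim: "(\<lambda>n. u (real (\<sigma> n))) \<longlonglongrightarrow> ub"
    using bounded_imp_convergent_subsequence[of "\<lambda>n. u (real n)"] by (auto simp: o_def)
  have li: "(\<lambda>n. u (real (\<sigma> n)) $ i) \<longlonglongrightarrow> ub $ i" for i by (rule tendsto_vec_nth[OF lim])
  have ub_nn: "0 \<le> ub $ i" for i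
  proof (rule tendsto_lowerbound[OF li])
    show "\<forall>\<^sub>F n in sequentially. 0 \<le> u (real (\<sigma> n)) $ i"
      using upos by (intro always_eventually allI) (simp add: less_imp_le)
  qed simp
  define xb where "xb = (\<chi> i. ub $ i ^ L)"
  have Xlim: "(\<lambda>n. X (real (\<sigma> n))) \<longlonglongrightarrow> xb"
    unfolding xu_def xb_def by (intro tendsto_vec_lambda tendsto_power li)
  have flim: "(\<lambda>n. F (real (\<sigma> n))) \<longlonglongrightarrow> f xb"
    by (intro tendsto_intros bounded_linear.tendsto[OF matrix_vector_mul_bounded_linear] Xlim)
  have bound: "\<forall>\<^sub>F n in sequentially. F (real (\<sigma> n)) \<le> f zs + C0 zs / real n"
  proof (rule eventually_sequentiallyI[of 1])
    fix n :: nat assume n: "1 \<le> n"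
    have "n \<le> \<sigma> n" using \<sigma> by (rule seq_suble)
    then have le: "real n \<le> real (\<sigma> n)" by simp
    have pos: "0 < real n" using n by simp
    have "F (real (\<sigma> n)) - f zs \<le> C0 zs / real (\<sigma> n)" using rate[OF zsn] le pos by simp
    also have "\<dots> \<le> C0 zs / real n" using C0_nonneg[OF zsn] le pos by (simp add: divide_left_mono)
    finally show "F (real (\<sigma> n)) \<le> f zs + C0 zs / real n" by simp
  qed
  have lz: "(\<lambda>n. f zs + C0 zs / real n) \<longlonglongrightarrow> f zs + 0"
    by (intro tendsto_add tendsto_const lim_const_over_n)
  have fxb: "f xb \<le> f zs + 0"
    by (rule tendsto_le[OF sequentially_bot lz flim bound])
  then have fxb: "f xb \<le> f zs" by simp
  have xb_in: "xb \<in> NNLS_sol A y"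
    unfolding NNLS_sol_def
  proof (intro CollectI conjI allI impI)
    show "0 \<le> xb $ i" for i using ub_nn by (simp add: xb_def)
    fix w :: "real^'n" assume "\<forall>i. 0 \<le> w $ i"
    then have "f zs \<le> f w" using zs by (simp add: NNLS_sol_def)
    then show "f xb \<le> f w" using fxb by simp
  qed
  define Ds where "Ds = (\<Sum>i\<in>UNIV. phi L (xb $ i) (ub $ i))"
  have Dlim: "(\<lambda>n. DD L xb u (real (\<sigma> n))) \<longlonglongrightarrow> Ds"
    unfolding DD_def Ds_def
  proof (rule tendsto_sum)
    fix i
    show "(\<lambda>n. phi L (xb $ i) (u (real (\<sigma> n)) $ i)) \<longlonglongrightarrow> phi L (xb $ i) (ub $ i)"
    proof (cases "ub $ i = 0")
      case True
      then have "xb $ i = 0" using L2 by (simp add: xb_def)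
      then have eqf: "phi L (xb $ i) = (\<lambda>w. w\<^sup>2 / 2)" by (simp add: phi_def fun_eq_iff)
      show ?thesis unfolding eqf by (intro tendsto_divide tendsto_power li tendsto_const) simp
    next
      case False
      then have "ub $ i > 0" using ub_nn[of i] by simp
      then have "isCont (phi L (xb $ i)) (ub $ i)" using phi_deriv[OF L2] DERIV_isCont by blast
      then show ?thesis using isCont_tendsto_compose li by blast
    qed
  qed
  have strong: "(norm (u t - ub))\<^sup>2 / 2 \<le> DD L xb u t - Ds" if t: "t \<ge> 0" for t
  proof -
    have "(norm (u t - ub))\<^sup>2 / 2 = (\<Sum>i\<in>UNIV. (u t $ i - ub $ i)\<^sup>2 / 2)"
      by (simp add: norm_sq_sum sum_divide_distrib)
    also have "\<dots> \<le> (\<Sum>i\<in>UNIV. phi L (xb $ i) (u t $ i) - phi L (xb $ i) (ub $ i))"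
    proof (rule sum_mono)
      fix i
      show "(u t $ i - ub $ i)\<^sup>2 / 2 \<le> phi L (xb $ i) (u t $ i) - phi L (xb $ i) (ub $ i)"
        using phi_strong[OF L2, of "u t $ i" "ub $ i"] upos t ub_nn[of i] by (simp add: xb_def)
    qed
    also have "\<dots> = DD L xb u t - Ds" by (simp add: DD_def Ds_def sum_subtractf)
    finally show ?thesis .
  qed
  have ulim: "(u \<longlongrightarrow> ub) at_top"
  proof (rule tendstoI)
    fix e :: real assume e: "e > 0"
    have "(\<lambda>n. DD L xb u (real (\<sigma> n)) - Ds) \<longlonglongrightarrow> 0" using Dlim by (rule LIM_zero)
    moreover have "e\<^sup>2 / 2 > 0" using e by simp
    ultimately have "\<forall>\<^sub>F n in sequentially. DD L xb u (real (\<sigma> n)) - Ds < e\<^sup>2 / 2"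
      by (rule order_tendstoD(2))
    then obtain N where N: "\<forall>n\<ge>N. DD L xb u (real (\<sigma> n)) - Ds < e\<^sup>2 / 2"
      by (auto simp: eventually_sequentially)
    show "\<forall>\<^sub>F t in at_top. dist (u t) ub < e"
      unfolding eventually_at_top_linorder
    proof (intro exI[of _ "real (\<sigma> N)"] allI impI)
      fix t assume t: "real (\<sigma> N) \<le> t"
      have t0: "t \<ge> 0" using t by (meson of_nat_0_le_iff order_trans)
      have "(norm (u t - ub))\<^sup>2 / 2 \<le> DD L xb u t - Ds" by (rule strong[OF t0])
      also have "\<dots> \<le> DD L xb u (real (\<sigma> N)) - Ds" using D_mono_min[OF xb_in _ t] by simp
      also have "\<dots> < e\<^sup>2 / 2" using N by simp
      finally have "(norm (u t - ub))\<^sup>2 < e\<^sup>2" by simp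
      then have "norm (u t - ub) < e" using e by (simp add: power2_less_imp_less less_imp_le)
      then show "dist (u t) ub < e" by (simp add: dist_norm)
    qed
  qed
  have "(X \<longlongrightarrow> xb) at_top"
    unfolding xu_def xb_def by (intro tendsto_vec_lambda tendsto_power tendsto_vec_nth ulim)
  then show ?thesis using xb_in rateP by blast
qed

end



lemma hp_upd:
  assumes "k \<in> {1..L}"
  shows "hadamard_prod L (X(k := z)) = (\<chi> i. z $ i * (\<Prod>j\<in>{1..L}-{k}. X j $ i))"
proof -
  have "(\<Prod>j\<in>{1..L}. (X(k := z)) j $ i) = z $ i * (\<Prod>j\<in>{1..L}-{k}. X j $ i)" for i
  proof -
    have "(\<Prod>j\<in>{1..L}. (X(k := z)) j $ i) = (X(k := z)) k $ i * (\<Prod>j\<in>{1..L}-{k}. (X(k := z)) j $ i)"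
      by (rule prod.remove) (use assms in auto)
    also have "(\<Prod>j\<in>{1..L}-{k}. (X(k := z)) j $ i) = (\<Prod>j\<in>{1..L}-{k}. X j $ i)"
      by (rule prod.cong) auto
    finally show ?thesis by simp
  qed
  then show ?thesis by (simp add: hadamard_prod_def vec_eq_iff)
qed

lemma hp_remove:
  assumes "k \<in> {1..L}"
  shows "hadamard_prod L X $ i = X k $ i * (\<Prod>j\<in>{1..L}-{k}. X j $ i)"
  using hp_upd[OF assms, of X "X k"] by (simp add: vec_eq_iff)

lemma sq_abs_eq: "(a::real)\<^sup>2 = b\<^sup>2 \<Longrightarrow> \<bar>a\<bar> = \<bar>b\<bar>"
  by (metis real_sqrt_abs)

lemma card_rest: "k \<in> {1..L} \<Longrightarrow> card ({1..L} - {k}) = L - 1"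
  by simp


theorem theorem1:
  fixes L :: nat and A :: "real^'n^'m" and y :: "real^'m" and x0 :: "real^'n"
    and xs :: "nat \<Rightarrow> real \<Rightarrow> real^'n"
  assumes "L \<ge> 2"
    and "\<forall>i. 0 < x0 $ i"
    and "\<forall>k\<in>{1..L}. xs k 0 = x0"
    and "\<forall>k\<in>{1..L}. \<forall>t\<ge>0. \<exists>g.
           GDERIV (\<lambda>z. L_over L A y ((\<lambda>j. xs j t)(k := z))) (xs k t) :> g \<and>
           (xs k has_vector_derivative (- g)) (at t within {0..})"
  shows "\<exists>xinf. ((\<lambda>t. hadamard_prod L (\<lambda>j. xs j t)) \<longlongrightarrow> xinf) at_top \<and>
           xinf \<in> NNLS_sol A y \<and>
           (\<exists>C>0. \<forall>xp\<in>NNLS_sol A y. \<forall>t>0.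
              (norm (A *v hadamard_prod L (\<lambda>j. xs j t) - A *v xp))\<^sup>2 \<le> C / t)"
proof -
  note L2 = assms(1) and x0p = assms(2) and init = assms(3) and gd = assms(4)
  define H where "H t = hadamard_prod L (\<lambda>j. xs j t)" for t
  define R where "R t = transpose A *v (A *v H t - y)" for t
  define P where "P k t i = (\<Prod>j\<in>{1..L}-{k}. xs j t $ i)" for k t i
  have der: "((\<lambda>t. xs k t $ i) has_real_derivative - (P k t i * R t $ i)) (at t within {0..})"
    if k: "k \<in> {1..L}" and t: "t \<ge> 0" for k t i
  proof -
    obtain g where g1: "GDERIV (\<lambda>z. L_over L A y ((\<lambda>j. xs j t)(k := z))) (xs k t) :> g"
      and g2: "(xs k has_vector_derivative - g) (at t within {0..})" using gd k t by blast
    have fe: "(\<lambda>z. L_over L A y ((\<lambda>j. xs j t)(k := z))) =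
        (\<lambda>z. (1/2) * (norm (A *v (\<chi> i. z$i * P k t i) - y))\<^sup>2)"
      by (simp add: L_over_def hp_upd[OF k] P_def fun_eq_iff)
    have "g = (\<chi> i. P k t i * (transpose A *v (A *v (\<chi> i. xs k t $ i * P k t i) - y)) $ i)"
      by (rule grad_eq) (use g1 fe in simp)
    moreover have "(\<chi> i. xs k t $ i * P k t i) = H t"
      using hp_remove[OF k, of "\<lambda>j. xs j t"] by (simp add: H_def P_def vec_eq_iff)
    ultimately have "g = (\<chi> i. P k t i * R t $ i)" by (simp add: R_def)
    then show ?thesis using vec_comp_deriv[OF g2, of i] by simp
  qed
  have HP: "H t $ i = xs k t $ i * P k t i" if "k \<in> {1..L}" for k t i
    using hp_remove[OF that, of "\<lambda>j. xs j t"] by (simp add: H_def P_def)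
  have one: "(1::nat) \<in> {1..L}" using L2 by simp
  have sq: "(xs k t $ i)\<^sup>2 = (xs 1 t $ i)\<^sup>2" if k: "k \<in> {1..L}" and t: "t \<ge> 0" for k t i
  proof -
    define h where "h s = (xs k s $ i)\<^sup>2 - (xs 1 s $ i)\<^sup>2" for s
    have hd: "\<forall>s\<ge>0. (h has_real_derivative 0) (at s within {0..})"
    proof (intro allI impI)
      fix s :: real assume s: "s \<ge> 0"
      have d: "(h has_real_derivative (of_nat 2 * ((- (P k s i * R s $ i)) * (xs k s $ i) ^ (2 - Suc 0))
           - of_nat 2 * ((- (P 1 s i * R s $ i)) * (xs 1 s $ i) ^ (2 - Suc 0)))) (at s within {0..})"
        unfolding h_def[abs_def]
        by (intro DERIV_diff DERIV_power der k one s)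
      have e: "of_nat 2 * ((- (P k s i * R s $ i)) * (xs k s $ i) ^ (2 - Suc 0))
           - of_nat 2 * ((- (P 1 s i * R s $ i)) * (xs 1 s $ i) ^ (2 - Suc 0)) = (0::real)"
        using HP[OF k, of s i] HP[OF one, of s i] by (simp add: algebra_simps)
      show "(h has_real_derivative 0) (at s within {0..})" using d[unfolded e] .
    qed
    have "h t \<le> h 0" by (rule mono_dec[where h'="\<lambda>_. 0", OF hd]) (use t in auto)
    moreover have "h 0 \<le> h t" by (rule mono_inc[where h'="\<lambda>_. 0", OF hd]) (use t in auto)
    moreover have "h 0 = 0" using init k one by (simp add: h_def)
    ultimately show ?thesis by (simp add: h_def)
  qed
  have absP: "\<bar>P k s i\<bar> = \<bar>xs k s $ i\<bar> ^ (L - 1)" if k: "k \<in> {1..L}" and s: "s \<ge> 0" for k s i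
  proof -
    have "\<bar>P k s i\<bar> = (\<Prod>j\<in>{1..L}-{k}. \<bar>xs j s $ i\<bar>)" by (simp add: P_def abs_prod)
    also have "\<dots> = (\<Prod>j\<in>{1..L}-{k}. \<bar>xs k s $ i\<bar>)"
    proof (rule prod.cong[OF refl])
      fix j assume "j \<in> {1..L}-{k}"
      then have "(xs j s $ i)\<^sup>2 = (xs k s $ i)\<^sup>2" using sq[of j s i] sq[OF k s, of i] s by simp
      then show "\<bar>xs j s $ i\<bar> = \<bar>xs k s $ i\<bar>" by (rule sq_abs_eq)
    qed
    also have "\<dots> = \<bar>xs k s $ i\<bar> ^ (L - 1)" by (simp only: prod_constant card_rest[OF k])
    finally show ?thesis .
  qed
  have contx: "continuous_on {0..} (\<lambda>s. xs k s $ i)" if "k \<in> {1..L}" for k i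
    by (rule cont_from_rderiv[where h'="\<lambda>t. - (P k t i * R t $ i)"]) (use der[OF that] in blast)
  have contH: "continuous_on {0..} H"
    unfolding H_def hadamard_prod_def by (intro continuous_on_vec_lambda continuous_on_prod contx)
  have contR: "continuous_on {0..} (\<lambda>s. R s $ i)" for i
    unfolding R_def
    by (intro continuous_on_component bounded_linear.continuous_on[OF matrix_vector_mul_bounded_linear]
          continuous_on_diff contH continuous_on_const)
  have pos: "xs k t $ i > 0" if k: "k \<in> {1..L}" and t: "t \<ge> 0" for k t i
  proof -
    define v where "v s = xs k s $ i" for s
    have v0: "v 0 > 0" using init k x0p by (simp add: v_def)
    have nz: "v T \<noteq> 0" if T: "T > 0" for T
    proof -
      define c where "c s = \<bar>v s\<bar> ^ (L - 2) * \<bar>R s $ i\<bar>" for s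
      have c1: "continuous_on {0..T} (\<lambda>s. xs k s $ i)" by (rule continuous_on_subset[OF contx[OF k]]) auto
      have c2: "continuous_on {0..T} (\<lambda>s. R s $ i)" by (rule continuous_on_subset[OF contR]) auto
      have cc: "continuous_on {0..T} c" unfolding c_def v_def by (intro continuous_intros c1 c2)
      obtain s0 where "s0 \<in> {0..T}" and s0: "\<forall>s\<in>{0..T}. c s \<le> c s0"
        using continuous_attains_sup[OF compact_Icc _ cc] T by auto
      define K where "K = c s0"
      have K0: "K \<ge> 0" by (simp add: K_def c_def)
      define w where "w s = (v s)\<^sup>2 * exp (2 * K * s)" for s
      define w' where "w' s = exp (2 * K * s) * (2 * K * (v s)\<^sup>2 - 2 * (v s * P k s i * R s $ i))" for s
      have wd: "\<forall>s\<ge>0. (w has_real_derivative w' s) (at s within {0..})"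
      proof (intro allI impI)
        fix s :: real assume s: "s \<ge> 0"
        have "(w has_real_derivative ((of_nat 2 * ((- (P k s i * R s $ i)) * (v s) ^ (2 - Suc 0))) * exp (2 * K * s)
              + (exp (2 * K * s) * (2 * K * 1)) * (v s)\<^sup>2)) (at s within {0..})"
          unfolding w_def[abs_def] v_def
          by (intro DERIV_mult DERIV_power der k s DERIV_chain2[OF DERIV_exp] DERIV_cmult DERIV_ident)
        moreover have "(of_nat 2 * ((- (P k s i * R s $ i)) * (v s) ^ (2 - Suc 0))) * exp (2 * K * s)
              + (exp (2 * K * s) * (2 * K * 1)) * (v s)\<^sup>2 = w' s"
          by (simp add: w'_def algebra_simps)
        ultimately show "(w has_real_derivative w' s) (at s within {0..})" by simp
      qed
      have wn: "\<forall>s. 0 < s \<and> s < T \<longrightarrow> 0 \<le> w' s"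
      proof (intro allI impI)
        fix s assume s: "0 < s \<and> s < T"
        have Ls: "\<bar>v s\<bar> ^ L = \<bar>v s\<bar> * \<bar>v s\<bar> ^ (L - 1)"
        proof -
          have "L = Suc (L - 1)" using L2 by simp
          then show ?thesis by (metis power_Suc)
        qed
        have L2s: "\<bar>v s\<bar> ^ L = (v s)\<^sup>2 * \<bar>v s\<bar> ^ (L - 2)"
        proof -
          have "L = 2 + (L - 2)" using L2 by simp
          then have "\<bar>v s\<bar> ^ L = \<bar>v s\<bar> ^ 2 * \<bar>v s\<bar> ^ (L - 2)" by (metis power_add)
          then show ?thesis by simp
        qed
        have "v s * P k s i * R s $ i \<le> \<bar>v s * P k s i * R s $ i\<bar>" by simp
        also have "\<dots> = \<bar>v s\<bar> ^ L * \<bar>R s $ i\<bar>"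
        proof -
          have aP: "\<bar>P k s i\<bar> = \<bar>v s\<bar> ^ (L - 1)" using absP[OF k, of s i] s by (simp add: v_def)
          show ?thesis by (simp only: abs_mult aP Ls)
        qed
        also have "\<dots> = (v s)\<^sup>2 * c s" by (simp add: c_def L2s)
        also have "\<dots> \<le> (v s)\<^sup>2 * K" using s0 s by (simp add: K_def mult_left_mono)
        finally have "v s * P k s i * R s $ i \<le> K * (v s)\<^sup>2" by (metis mult.commute)
        then show "0 \<le> w' s" by (simp add: w'_def)
      qed
      have "w 0 \<le> w T" by (rule mono_inc[OF wd wn]) (use T in auto)
      moreover have "w 0 > 0" using v0 by (simp add: w_def)
      ultimately have "w T > 0" by simp
      then show ?thesis by (auto simp: w_def)
    qed
    show ?thesis
    proof (rule ccontr)
      assume "\<not> xs k t $ i > 0"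
      then have vt: "v t \<le> 0" by (simp add: v_def)
      have cv: "continuous_on {0..t} v" unfolding v_def
        by (rule continuous_on_subset[OF contx[OF k]]) auto
      obtain s where s: "0 \<le> s" "s \<le> t" "v s = 0"
        using IVT2'[of v t 0 0, OF vt _ t cv] v0 by auto
      show False
      proof (cases "s = 0")
        case True then show False using s v0 by simp
      next
        case False then show False using s nz[of s] by simp
      qed
    qed
  qed
  define u where "u = xs 1"
  have eq: "xs k t = u t" if k: "k \<in> {1..L}" and t: "t \<ge> 0" for k t
  proof -
    have "xs k t $ i = u t $ i" for i
      using power2_eq_imp_eq[OF sq[OF k t, of i]] pos[OF k t, of i] pos[OF one t, of i]
      by (simp add: u_def)
    then show ?thesis by (simp add: vec_eq_iff)
  qed
  have Hu: "H t = xu L u t" if t: "t \<ge> 0" for t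
  proof -
    have "H t $ i = u t $ i ^ L" for i
    proof -
      have "H t $ i = (\<Prod>j\<in>{1..L}. xs j t $ i)" by (simp add: H_def hadamard_prod_def)
      also have "\<dots> = (\<Prod>j\<in>{1..L}. u t $ i)" by (rule prod.cong) (use eq t in auto)
      finally show ?thesis by simp
    qed
    then show ?thesis by (simp add: xu_def vec_eq_iff)
  qed
  have Pu: "P 1 t i = u t $ i ^ (L - 1)" if t: "t \<ge> 0" for t i
  proof -
    have "P 1 t i = (\<Prod>j\<in>{1..L}-{1}. u t $ i)" unfolding P_def
      by (rule prod.cong) (use eq t in auto)
    then show ?thesis by (simp only: prod_constant card_rest[OF one])
  qed
  have Ru: "R t = rr L A y u t" if "t \<ge> 0" for t
    using Hu[OF that] by (simp add: R_def rr_def)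
  interpret fl: flow L A y u
  proof
    show "L \<ge> 2" by (rule L2)
    show "\<forall>t\<ge>0. \<forall>i. 0 < u t $ i" using pos[OF one] by (simp add: u_def)
    show "\<forall>t\<ge>0. \<forall>i. ((\<lambda>t. u t $ i) has_real_derivative - (u t $ i ^ (L - 1) * rr L A y u t $ i)) (at t within {0..})"
      using der[OF one] Pu Ru by (simp add: u_def)
  qed
  obtain xinf C where lim: "(xu L u \<longlongrightarrow> xinf) at_top" and xin: "xinf \<in> NNLS_sol A y"
    and C: "C > 0" "\<forall>xp\<in>NNLS_sol A y. \<forall>t>0. (norm (A *v xu L u t - A *v xp))\<^sup>2 \<le> C / t"
    using fl.flow_main by blast
  have ev: "\<forall>\<^sub>F t in at_top. xu L u t = hadamard_prod L (\<lambda>j. xs j t)"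
    unfolding eventually_at_top_linorder
  proof (intro exI[of _ 0] allI impI)
    fix t :: real assume "0 \<le> t"
    then show "xu L u t = hadamard_prod L (\<lambda>j. xs j t)" using Hu[of t] by (simp add: H_def)
  qed
  have "((\<lambda>t. hadamard_prod L (\<lambda>j. xs j t)) \<longlongrightarrow> xinf) at_top"
    using tendsto_cong[OF ev] lim by simp
  moreover have "\<forall>xp\<in>NNLS_sol A y. \<forall>t>0.
              (norm (A *v hadamard_prod L (\<lambda>j. xs j t) - A *v xp))\<^sup>2 \<le> C / t"
    using C(2) Hu by (auto simp: H_def)
  ultimately show ?thesis using xin C(1) by blast
qed


end
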